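(* Let $f\in{\rm elh}(\mathbb{C})$. If there exists $g\in{\rm elh}(\mathbb{C})$ such that $T_f(g)=T_f(f\circ g)$, then $f(\mathbb{C})=\mathbb{C}$.
   Context: ${\rm elh}(\mathbb{C})$ denotes the set of entire functions with nowhere vanishing derivative and derivative $1$ at $0$. For an entire function $h$, $T_f(h)$ (the subscript $f$ stands for "finite") is the set of all continuous $\gamma:[0,\infty)\to\mathbb{C}$ with $\lim_{t\to\infty}|\gamma(t)|=\infty$ such that $\lim_{t\to\infty}h(\gamma(t))$ exists and belongs to $\mathbb{C}$. *)

theory Defs
  imports "HOL-Complex_Analysis.Complex_Analysis"
begin

definition elh :: "(complex \<Rightarrow> complex) set" where
  "elh = {h. h holomorphic_on UNIV \<and> (\<forall>z. deriv h z \<noteq> 0) \<and> deriv h 0 = 1}"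

text \<open>Curves are functions real => complex; only their values on [0,infinity) matter,
  continuity is required on {0..}, limits are along t -> +infinity.\<close>
definition T_f :: "(complex \<Rightarrow> complex) \<Rightarrow> (real \<Rightarrow> complex) set" where
  "T_f h = {\<gamma>. continuous_on {0..} \<gamma>
              \<and> filterlim (\<lambda>t. norm (\<gamma> t)) at_top at_top
              \<and> (\<exists>L::complex. ((\<lambda>t. h (\<gamma> t)) \<longlongrightarrow> L) at_top)}"

end

theory Submission imports Defs begin

lemma comp_escape:
  fixes w :: "complex \<Rightarrow> complex" and n :: real
  assumes holw: "w holomorphic_on UNIV" and n: "n > 0"
    and z1: "norm (w z1) < n" and p: "norm (w p) > n"
  shows "\<exists>q \<in> connected_component_set {z. n < norm (w z)} p. norm (w q) > n + 1"
proof (rule ccontr)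
  assume contra: "\<not> (\<exists>q \<in> connected_component_set {z. n < norm (w z)} p. norm (w q) > n + 1)"
  define U where "U = {z. n < norm (w z)}"
  define D where "D = connected_component_set U p"
  have M: "\<And>q. q \<in> D \<Longrightarrow> norm (w q) \<le> n + 1"
    using contra by (auto simp: D_def U_def not_less)
  have contw: "continuous_on UNIV w"
    by (simp add: holw holomorphic_on_imp_continuous_on)
  have openU: "open U" unfolding U_def
    by (intro open_Collect_less continuous_intros) (auto intro: continuous_on_subset[OF contw])
  then have openD: "open D" by (simp add: D_def open_connected_component)
  have pD: "p \<in> D" using p by (simp add: D_def U_def)
  have DU: "D \<subseteq> U" by (simp add: D_def connected_component_subset)
  have "open {z. norm (w z) < n}"
    by (intro open_Collect_less continuous_intros) (auto intro: continuous_on_subset[OF contw])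
  then obtain r where r: "r > 0" "ball z1 r \<subseteq> {z. norm (w z) < n}"
    using z1 by (meson mem_Collect_eq open_contains_ball)
  have clU: "closure U \<subseteq> {z. n \<le> norm (w z)}"
    unfolding U_def
    by (intro closure_minimal closed_Collect_le continuous_intros)
       (auto intro: continuous_on_subset[OF contw])
  have clD1: "closure D \<subseteq> {z. norm (w z) \<le> n + 1}"
    by (intro closure_minimal closed_Collect_le continuous_intros)
       (auto intro: continuous_on_subset[OF contw] M)
  have "D \<subseteq> - ball z1 r" using r DU by (force simp: U_def subset_iff)
  then have clD2: "closure D \<subseteq> - ball z1 r"
    by (intro closure_minimal) auto
  have clD3: "closure D \<subseteq> closure U" using DU closure_mono by blast
  have frD: "frontier D \<subseteq> {z. norm (w z) = n}"
  proof -
    have "frontier D \<subseteq> frontier U" by (simp add: D_def frontier_of_connected_component_subset)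
    also have "\<dots> = closure U - U" using openU by (simp add: frontier_def interior_open)
    also have "\<dots> \<subseteq> {z. norm (w z) = n}" using clU by (auto simp: U_def)
    finally show ?thesis .
  qed
  have q1: "norm (w p) / n > 1" using p n by simp
  obtain k where k: "dist z1 p / r < (norm (w p) / n) ^ k"
    using real_arch_pow[OF q1] by blast
  define R where "R = norm z1 + norm p + 1 + (n+1)^k * r / n^k"
  define S where "S = D \<inter> ball 0 R"
  define F where "F = (\<lambda>z. w z ^ k / (z - z1))"
  have nz: "z1 \<notin> closure D" using clD2 r by auto
  have holF: "F holomorphic_on (UNIV - {z1})" unfolding F_def
    by (intro holomorphic_intros holomorphic_on_subset[OF holw]) auto
  have "norm (F p) \<le> n^k / r"
  proof (rule maximum_modulus_frontier[of F S])
    have "open S" by (simp add: S_def openD open_Int)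
    then show "F holomorphic_on interior S"
      using nz closure_subset[of D] interior_subset[of D] by (auto simp: S_def interior_open intro!: holomorphic_on_subset[OF holF])
    have "closure S \<subseteq> closure D" by (simp add: S_def closure_mono)
    then show "continuous_on (closure S) F"
      using nz by (auto intro!: holomorphic_on_imp_continuous_on holomorphic_on_subset[OF holF])
    show "bounded S" by (simp add: S_def bounded_Int)
    show "p \<in> S" using pD by (simp add: S_def R_def) (smt (verit) norm_ge_zero divide_nonneg_nonneg zero_le_power mult_nonneg_nonneg r n)
  next
    fix z assume zf: "z \<in> frontier S"
    have zc: "z \<in> closure D" using zf frontier_Int[of D "ball 0 R"] closure_mono[of S D]
      by (auto simp: S_def)
    have dz: "r \<le> dist z1 z" using zc clD2 by auto
    have wz: "norm (w z) \<le> n + 1" using zc clD1 by auto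
    have dpos: "0 < norm (z - z1)" using dz r by (simp add: dist_norm norm_minus_commute) (metis norm_zero not_less right_minus_eq)
    have "z \<in> frontier D \<or> z \<in> frontier (ball 0 R)"
      using zf frontier_Int[of D "ball 0 R"] by (auto simp: S_def)
    then show "norm (F z) \<le> n^k / r"
    proof
      assume "z \<in> frontier D"
      then have "norm (w z) = n" using frD by auto
      then have "norm (F z) = n^k / norm (z - z1)" by (simp add: F_def norm_divide norm_power)
      also have "\<dots> \<le> n^k / r" using dz r n dpos
        by (intro divide_left_mono) (auto simp: dist_norm norm_minus_commute)
      finally show ?thesis .
    next
      assume "z \<in> frontier (ball 0 R)"
      moreover have "R > 0" unfolding R_def using n r
        by (smt (verit) norm_ge_zero divide_nonneg_nonneg zero_le_power mult_nonneg_nonneg)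
      ultimately have nzR: "norm z = R" by auto
      have big: "(n+1)^k * r / n^k \<le> norm (z - z1)"
        using norm_triangle_ineq2[of z z1] nzR by (simp add: R_def) (smt (verit) norm_ge_zero)
      have pos: "0 < (n+1)^k * r / n^k" using n r by simp
      have "norm (F z) = norm (w z)^k / norm (z - z1)" by (simp add: F_def norm_divide norm_power)
      also have "\<dots> \<le> (n+1)^k / norm (z - z1)"
        using wz dpos by (intro divide_right_mono power_mono) auto
      also have "\<dots> \<le> (n+1)^k / ((n+1)^k * r / n^k)"
        using big pos n dpos r by (intro divide_left_mono) (auto intro!: divide_pos_pos mult_pos_pos)
      also have "\<dots> = n^k / r" using n r by (simp add: field_simps)
      finally show ?thesis .
    qed
  qed
  moreover have "dist z1 p > 0" using pD clD2 closure_subset r by fastforce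
  ultimately have "norm (w p)^k / dist z1 p \<le> n^k / r"
    by (simp add: F_def norm_divide norm_power dist_norm norm_minus_commute)
  then have "(norm (w p) / n)^k \<le> dist z1 p / r"
    using n r \<open>dist z1 p > 0\<close> by (simp add: field_simps power_divide)
  with k show False by simp
qed


lemma iversen_path:
  fixes w :: "complex \<Rightarrow> complex"
  assumes holw: "w holomorphic_on UNIV" and z1: "norm (w z1) < 1" and p0: "norm (w p0) > 1"
  shows "\<exists>\<gamma>. continuous_on {0..} \<gamma> \<and> (\<forall>t\<ge>0. t < norm (w (\<gamma> t)))"
proof -
  define U where "U = (\<lambda>m::nat. {z. real m + 1 < norm (w z)})"
  have contw: "continuous_on UNIV w"
    by (simp add: holw holomorphic_on_imp_continuous_on)
  have openU: "open (U m)" for m unfolding U_def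
    by (intro open_Collect_less continuous_intros) (auto intro: continuous_on_subset[OF contw])
  have "\<forall>m x. \<exists>q. real m + 1 < norm (w x) \<longrightarrow>
          q \<in> connected_component_set (U m) x \<and> real m + 2 < norm (w q)"
  proof (intro allI)
    fix m x
    show "\<exists>q. real m + 1 < norm (w x) \<longrightarrow>
          q \<in> connected_component_set (U m) x \<and> real m + 2 < norm (w q)"
    proof (cases "real m + 1 < norm (w x)")
      case True
      have "norm (w z1) < real m + 1" using z1 by linarith
      from comp_escape[OF holw _ this True] obtain q where
        "q \<in> connected_component_set (U m) x" "real m + 1 + 1 < norm (w q)"
        by (auto simp: U_def)
      then show ?thesis by (intro exI[of _ q]) auto
    qed auto
  qed
  then obtain nxt where nxt: "\<And>m x. real m + 1 < norm (w x) \<Longrightarrow>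
          nxt m x \<in> connected_component_set (U m) x \<and> real m + 2 < norm (w (nxt m x))"
    by metis
  define p where "p = rec_nat p0 nxt"
  have p_Suc: "p (Suc m) = nxt m (p m)" for m by (simp add: p_def)
  have pm: "real m + 1 < norm (w (p m))" for m
  proof (induction m)
    case 0 then show ?case using p0 by (simp add: p_def)
  next
    case (Suc m) then show ?case using nxt[OF Suc] by (simp add: p_Suc)
  qed
  have "\<forall>m. \<exists>g. path g \<and> path_image g \<subseteq> U m \<and> pathstart g = p m \<and> pathfinish g = p (Suc m)"
  proof
    fix m
    have "p (Suc m) \<in> path_component_set (U m) (p m)"
      using nxt[OF pm[of m]] by (simp add: p_Suc open_path_connected_component_set[OF openU])
    then show "\<exists>g. path g \<and> path_image g \<subseteq> U m \<and> pathstart g = p m \<and> pathfinish g = p (Suc m)"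
      by (auto simp: path_component_def)
  qed
  then obtain P where P: "\<And>m. path (P m)" "\<And>m. path_image (P m) \<subseteq> U m"
     "\<And>m. pathstart (P m) = p m" "\<And>m. pathfinish (P m) = p (Suc m)"
    by metis
  define \<gamma> where "\<gamma> = (\<lambda>t. P (nat \<lfloor>t\<rfloor>) (t - of_int \<lfloor>t\<rfloor>))"
  have piece: "\<gamma> t = P m (t - real m)" if "real m \<le> t" "t \<le> real m + 1" for m t
  proof (cases "t = real m + 1")
    case True
    then have "\<gamma> t = P (Suc m) 0" by (simp add: \<gamma>_def nat_add_distrib)
    also have "\<dots> = P m 1" using P(3)[of "Suc m"] P(4)[of m] by (simp add: pathstart_def pathfinish_def)
    finally show ?thesis using True by simp
  next
    case False
    then have "\<lfloor>t\<rfloor> = int m" using that by (simp add: floor_eq_iff)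
    then show ?thesis by (simp add: \<gamma>_def)
  qed
  have cpiece: "continuous_on {real m..real m + 1} \<gamma>" for m
  proof -
    have "continuous_on {real m..real m + 1} (\<lambda>t. P m (t - real m))"
    proof (rule continuous_on_compose2[of "{0..1}" "P m"])
      show "continuous_on {0..1} (P m)" using P(1)[of m] by (simp add: path_def)
      show "continuous_on {real m..real m + 1} (\<lambda>t. t - real m)" by (intro continuous_intros)
      show "(\<lambda>t. t - real m) ` {real m..real m + 1} \<subseteq> {0..1}" by auto
    qed
    then show ?thesis by (rule continuous_on_eq) (use piece in auto)
  qed
  have cN: "continuous_on {0..real N} \<gamma>" for N
  proof (induction N)
    case 0 then show ?case by simp
  next
    case (Suc N)
    have "{0..real (Suc N)} = {0..real N} \<union> {real N..real N + 1}" by auto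
    then show ?case using continuous_on_closed_Un[OF _ _ Suc cpiece[of N]] by simp
  qed
  have cont: "continuous_on {0..} \<gamma>"
    unfolding continuous_on_eq_continuous_within
  proof
    fix t :: real assume "t \<in> {0..}"
    define N where "N = nat \<lfloor>t\<rfloor> + 1"
    have tN: "t < real N" unfolding N_def using \<open>t \<in> {0..}\<close>
      by linarith
    have "continuous (at t within {0..real N}) \<gamma>"
      using cN[of N] \<open>t \<in> {0..}\<close> tN by (simp add: continuous_on_eq_continuous_within)
    moreover have "at t within {0..} = at t within {0..real N}"
      by (rule at_within_nhd[of _ "{..<real N}"]) (use tN in auto)
    ultimately show "continuous (at t within {0..}) \<gamma>" by simp
  qed
  have bound: "t < norm (w (\<gamma> t))" if "t \<ge> 0" for t
  proof -
    define m where "m = nat \<lfloor>t\<rfloor>"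
    have m1: "real m \<le> t" "t < real m + 1" using that by (simp_all add: m_def)
    then have "\<gamma> t = P m (t - real m)" using piece by simp
    moreover have "P m (t - real m) \<in> path_image (P m)"
      using m1 by (simp add: path_image_def)
    ultimately have "real m + 1 < norm (w (\<gamma> t))" using P(2)[of m] by (auto simp: U_def)
    then show ?thesis using m1 by linarith
  qed
  show ?thesis using cont bound by blast
qed


theorem proposition3p10:
  fixes f :: "complex \<Rightarrow> complex"
  assumes "f \<in> elh"
    and "\<exists>g \<in> elh. T_f g = T_f (f \<circ> g)"
  shows "range f = UNIV"
proof (rule ccontr)
  assume "range f \<noteq> UNIV"
  then obtain a where a: "a \<notin> range f" by auto
  obtain g where g: "g \<in> elh" and T: "T_f g = T_f (f \<circ> g)" using assms(2) by blast
  have holf: "f holomorphic_on UNIV" and df: "\<And>z. deriv f z \<noteq> 0" using assms(1) by (auto simp: elh_def)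
  have holg: "g holomorphic_on UNIV" and dg: "deriv g 0 = 1" using g by (auto simp: elh_def)
  define h where "h = (\<lambda>z. f (g z))"
  have holh: "h holomorphic_on UNIV" unfolding h_def
    using holomorphic_on_compose[OF holg holomorphic_on_subset[OF holf]] by (simp add: o_def)
  have ha: "h z \<noteq> a" for z using a by (auto simp: h_def)
  have contf: "continuous_on UNIV f" by (simp add: holf holomorphic_on_imp_continuous_on)
  have conth: "continuous_on UNIV h" by (simp add: holh holomorphic_on_imp_continuous_on)
  have "(h has_field_derivative deriv f (g 0) * deriv g 0) (at 0)"
    unfolding h_def
    using DERIV_chain2[OF holomorphic_derivI[OF holf] holomorphic_derivI[OF holg]]
    by (auto simp: mult.commute)
  then have hder: "(h has_field_derivative deriv f (g 0)) (at 0)" using dg by simp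
  have nonconst: False if "\<And>z. h z = c" for c
  proof -
    have "h = (\<lambda>_. c)" using that by auto
    then have "((\<lambda>_. c) has_field_derivative deriv f (g 0)) (at 0)" using hder by simp
    moreover have "((\<lambda>_. c) has_field_derivative 0) (at 0)" by simp
    ultimately have "deriv f (g 0) = 0" using DERIV_unique by blast
    with df show False by blast
  qed
  define w where "w = (\<lambda>z. inverse (h z - a))"
  have holw: "w holomorphic_on UNIV" unfolding w_def
    using ha by (intro holomorphic_intros holh) auto
  have contw: "continuous_on UNIV w" by (simp add: holw holomorphic_on_imp_continuous_on)
  have normw: "norm (w z) = inverse (norm (h z - a))" for z by (simp add: w_def norm_inverse)
  obtain z1 where z1: "norm (w z1) < 1"
  proof -
    have "\<exists>z. 1 < norm (h z - a)"
    proof (rule ccontr)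
      assume "\<not> ?thesis"
      then have "\<forall>z. norm (h z) \<le> norm a + 1"
        by (metis add.commute norm_triangle_sub add_le_cancel_left order_trans not_less)
      then have "bounded (range h)" by (auto simp: bounded_iff)
      then have "h constant_on UNIV" by (rule Liouville_theorem[OF holh])
      then obtain c where "\<And>z. h z = c" by (auto simp: constant_on_def)
      then show False using nonconst by blast
    qed
    then obtain z where "1 < norm (h z - a)" by blast
    then have "norm (w z) < 1" by (simp add: normw inverse_less_1_iff)
    then show ?thesis using that by blast
  qed
  obtain p0 where p0: "norm (w p0) > 1"
  proof -
    have "\<exists>z. norm (h z - a) < 1"
    proof (rule ccontr)
      assume "\<not> ?thesis"
      then have "\<forall>z. norm (w z) \<le> 1" by (simp add: normw not_less inverse_le_1_iff)
      then have "bounded (range w)" by (auto simp: bounded_iff)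
      then have "w constant_on UNIV" by (rule Liouville_theorem[OF holw])
      then obtain c where c: "\<And>z. w z = c" by (auto simp: constant_on_def)
      have "h z = a + inverse c" for z using c[of z] ha[of z] by (auto simp: w_def)
      then show False using nonconst by blast
    qed
    then obtain z where z: "norm (h z - a) < 1" by blast
    have "0 < norm (h z - a)" using ha[of z] by simp
    then have "norm (w z) > 1" using z by (simp add: normw one_less_inverse)
    then show ?thesis using that by blast
  qed
  obtain \<gamma> where cont\<gamma>: "continuous_on {0..} \<gamma>" and big: "\<And>t. t \<ge> 0 \<Longrightarrow> t < norm (w (\<gamma> t))"
    using iversen_path[OF holw z1 p0] by blast
  have lim_norm: "filterlim (\<lambda>t. norm (\<gamma> t)) at_top at_top"
  unfolding filterlim_at_top
  proof (intro allI)
    fix Z :: real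
    have "compact (w ` cball 0 Z)"
      by (intro compact_continuous_image continuous_on_subset[OF contw]) auto
    then obtain B where B: "\<And>z. z \<in> cball 0 Z \<Longrightarrow> norm (w z) \<le> B"
      by (meson compact_imp_bounded bounded_iff imageI)
    have "\<forall>t\<ge>max 0 B. Z \<le> norm (\<gamma> t)"
    proof (intro allI impI)
      fix t assume "max 0 B \<le> t"
      then have "B < norm (w (\<gamma> t))" using big[of t] by linarith
      then have "\<gamma> t \<notin> cball 0 Z" using B by force
      then show "Z \<le> norm (\<gamma> t)" by simp
    qed
    then show "eventually (\<lambda>t. Z \<le> norm (\<gamma> t)) at_top"
      unfolding eventually_at_top_linorder by blast
  qed
  have lim_h: "((\<lambda>t. h (\<gamma> t)) \<longlongrightarrow> a) at_top"
  proof -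
    have "((\<lambda>t. h (\<gamma> t) - a) \<longlongrightarrow> 0) at_top"
    proof (rule Lim_null_comparison)
      show "eventually (\<lambda>t. norm (h (\<gamma> t) - a) \<le> inverse t) at_top"
        unfolding eventually_at_top_linorder
      proof (intro exI[of _ 1] allI impI)
        fix t :: real assume "1 \<le> t"
        have "t < inverse (norm (h (\<gamma> t) - a))" using big[of t] \<open>1 \<le> t\<close> by (simp add: normw)
        then have "inverse (inverse (norm (h (\<gamma> t) - a))) < inverse t"
          using \<open>1 \<le> t\<close> by (intro less_imp_inverse_less) auto
        then show "norm (h (\<gamma> t) - a) \<le> inverse t" by simp
      qed
      show "((\<lambda>t::real. inverse t) \<longlongrightarrow> 0) at_top"
        by (rule tendsto_inverse_0_at_top[OF filterlim_ident])
    qed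
    then show ?thesis by (simp add: LIM_zero_iff)
  qed
  have "\<gamma> \<in> T_f (f \<circ> g)"
    unfolding T_f_def using cont\<gamma> lim_norm lim_h by (auto simp: h_def)
  then have "\<gamma> \<in> T_f g" using T by simp
  then obtain L where L: "((\<lambda>t. g (\<gamma> t)) \<longlongrightarrow> L) at_top" by (auto simp: T_f_def)
  have "((\<lambda>t. f (g (\<gamma> t))) \<longlongrightarrow> f L) at_top"
    using continuous_on_tendsto_compose[OF contf L] by simp
  then have "f L = a" using lim_h tendsto_unique[OF trivial_limit_at_top_linorder] by (fastforce simp: h_def)
  then show False using a by auto
qed

end
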